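(* Let $n \ge 2$ and let $Q(x) = x_1x_2 + x_3x_4 + \cdots + x_{2n-1}x_{2n}$ be the hyperbolic quadratic form on $V(2n,2)$. Let $\Pi$ and $\Sigma$ be two totally singular $n$-dimensional subspaces with $\Pi \cap \Sigma = 0$. If $Y$ is a singular point with $Y \not\subseteq \Pi$ and $Y \not\subseteq \Sigma$, then there is a unique $2$-dimensional subspace (line) $J$ containing $Y$ such that $J \cap \Pi \neq 0$ and $J \cap \Sigma \neq 0$; moreover this line $J$ is totally singular.
   Context: Points are $1$-dimensional subspaces, lines are $2$-dimensional subspaces. A point $\langle y\rangle$ is singular if $Q(y)=0$; a subspace is totally singular if all its points are singular. *)

theory Defs
  imports Complex_Main "HOL-Library.Z2" "HOL-Library.Function_Algebras"
begin

text \<open>GF(2) is the library type bit. Vectors of V(2n,2) are functions nat => bit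
  vanishing outside the coordinate set {0..<2n}; coordinate x_k of the paper is x (k-1).\<close>

definition scl :: "bit \<Rightarrow> (nat \<Rightarrow> bit) \<Rightarrow> (nat \<Rightarrow> bit)" where
  "scl c x = (\<lambda>i. c * x i)"

lemma vector_space_scl: "vector_space scl"
  by unfold_locales (simp_all only: scl_def fun_eq_iff distrib_left distrib_right mult.assoc mult_1_left plus_fun_def simp_thms)

definition Vsp :: "nat \<Rightarrow> (nat \<Rightarrow> bit) set" where
  "Vsp n = {x. \<forall>i. 2 * n \<le> i \<longrightarrow> x i = 0}"

definition Qf :: "nat \<Rightarrow> (nat \<Rightarrow> bit) \<Rightarrow> bit" where
  "Qf n x = (\<Sum>i<n. x (2 * i) * x (2 * i + 1))"

definition subsp :: "nat \<Rightarrow> (nat \<Rightarrow> bit) set \<Rightarrow> bool" where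
  "subsp n S \<longleftrightarrow> S \<subseteq> Vsp n \<and> Modules.module.subspace scl S"

definition sdim :: "(nat \<Rightarrow> bit) set \<Rightarrow> nat" where
  "sdim S = Vector_Spaces.vector_space.dim scl S"

definition tot_sing :: "nat \<Rightarrow> (nat \<Rightarrow> bit) set \<Rightarrow> bool" where
  "tot_sing n S \<longleftrightarrow> (\<forall>x\<in>S. Qf n x = 0)"

end

theory Submission
  imports Defs
begin

interpretation V: vector_space scl by (rule vector_space_scl)

lemma bit_cases2: "(c::bit) = 0 \<or> c = 1" by (cases c) auto

lemma fadd_self[simp]: "(x::nat\<Rightarrow>bit) + x = 0"
  by (rule ext) (auto simp: plus_fun_def)

lemma fadd_self2[simp]: "(x::nat\<Rightarrow>bit) + (x + y) = y" "y + x + x = y" "x + (y + x) = y" "(x + y) + x = y"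
  by (rule ext, auto simp: plus_fun_def)+

lemma scl0: "scl 0 x = 0" and scl1: "scl 1 x = x"
  by (auto simp: scl_def)

lemma sub4: "V.subspace {0, u, v, u + (v::nat\<Rightarrow>bit)}"
  unfolding V.subspace_def
  apply (intro conjI ballI allI)
    apply simp
   apply (auto simp: add_ac)[1]
  by (metis bit_cases2 scl0 scl1 insertCI)

lemma span2: "V.span {u, v} \<subseteq> {0, u, v, u + v}"
  by (rule V.span_minimal[OF _ sub4]) auto

lemma span1: "V.span {v} \<subseteq> {0, v}"
  using span2[of v v] by auto

lemma indep3:
  assumes "z \<notin> {0,u,v,u+v}" "u \<noteq> 0" "v \<noteq> 0" "u \<noteq> v"
  shows "V.independent {z,u,v}"
proof -
  have "V.independent {v}" using assms by simp
  moreover have "u \<notin> V.span {v}" using span1[of v] assms by auto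
  ultimately have "V.independent {u,v}" by (rule V.independent_insertI[rotated])
  moreover have "z \<notin> V.span {u,v}" using span2[of u v] assms by auto
  ultimately show ?thesis by (rule V.independent_insertI[rotated])
qed

lemma two_dim:
  assumes J: "V.subspace J" "V.dim J = 2" and uv: "u \<in> J" "v \<in> J" "u \<noteq> 0" "v \<noteq> 0" "u \<noteq> v"
  shows "J = {0, u, v, u + v}"
proof
  show "{0, u, v, u + v} \<subseteq> J" using J uv by (auto intro: V.subspace_0 V.subspace_add)
  show "J \<subseteq> {0, u, v, u + v}"
  proof
    fix z assume z: "z \<in> J"
    show "z \<in> {0, u, v, u + v}"
    proof (rule ccontr)
      assume zn: "z \<notin> {0, u, v, u + v}"
      have ind: "V.independent {z,u,v}" by (rule indep3[OF zn uv(3-5)])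
      obtain B where B: "B \<subseteq> J" "V.independent B" "J \<subseteq> V.span B" "card B = V.dim J"
        by (rule V.basis_exists)
      have fB: "finite B" using B J by (metis card_eq_0_iff zero_neq_numeral)
      have "{z,u,v} \<subseteq> V.span B" using B z uv by auto
      from V.independent_span_bound[OF fB ind this] have "card {z,u,v} \<le> 2" using B J by simp
      moreover have "card {z,u,v} = 3" using zn uv by auto
      ultimately show False by simp
    qed
  qed
qed

lemma sum_fun_app: "finite A \<Longrightarrow> (sum (f :: 'a \<Rightarrow> nat \<Rightarrow> bit) A) j = (\<Sum>a\<in>A. f a j)"
  by (induction A rule: finite_induct) (auto simp: plus_fun_def)

definition dl :: "nat \<Rightarrow> nat \<Rightarrow> bit" where "dl i = (\<lambda>j. if j = i then 1 else 0)"

lemma vsp_span: "Vsp n \<subseteq> V.span (dl ` {..<2*n})"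
proof
  fix x assume x: "x \<in> Vsp n"
  have "x = (\<Sum>i<2*n. scl (x i) (dl i))"
  proof
    fix j
    have "(\<Sum>i<2*n. scl (x i) (dl i)) j = (\<Sum>i<2*n. if j = i then x i else 0)"
      unfolding sum_fun_app[OF finite_lessThan] scl_def dl_def by (intro sum.cong) auto
    also have "\<dots> = (if j \<in> {..<2*n} then x j else 0)" by (rule sum.delta'[OF finite_lessThan])
    also have "\<dots> = x j" using x by (auto simp: Vsp_def)
    finally show "x j = (\<Sum>i<2*n. scl (x i) (dl i)) j" by simp
  qed
  also have "\<dots> \<in> V.span (dl ` {..<2*n})"
    by (intro V.span_sum V.span_scale V.span_base) auto
  finally show "x \<in> V.span (dl ` {..<2*n})" .
qed

lemma indep_un_aux:
  assumes A: "V.independent A" and C: "V.subspace Cs" "C \<subseteq> Cs"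
    and int: "V.span A \<inter> Cs = {0}" and a: "a \<in> A"
  shows "a \<notin> V.span ((A \<union> C) - {a})"
proof
  assume h: "a \<in> V.span ((A \<union> C) - {a})"
  have "(A \<union> C) - {a} \<subseteq> (A - {a}) \<union> C" by auto
  hence "a \<in> V.span ((A - {a}) \<union> C)" using h V.span_mono by blast
  then obtain x w where xw: "a = x + w" "x \<in> V.span (A - {a})" "w \<in> V.span C"
    unfolding V.span_Un by blast
  have wC: "w \<in> Cs" using xw(3) C V.span_minimal by blast
  have "w = a + x" using xw(1) by simp
  moreover have "a + x \<in> V.span A"
  proof -
    have "x \<in> V.span A" using xw(2) V.span_mono[of "A - {a}" A] by auto
    thus ?thesis by (rule V.span_add[OF V.span_base[OF a]])
  qed
  ultimately have "w = 0" using wC int by auto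
  hence "a \<in> V.span (A - {a})" using xw by simp
  thus False using A a V.dependent_def by blast
qed

lemma indep_un:
  assumes A: "V.independent A" "V.subspace As" "A \<subseteq> As" "As \<subseteq> V.span A"
    and C: "V.independent C" "V.subspace Cs" "C \<subseteq> Cs" "Cs \<subseteq> V.span C"
    and int: "As \<inter> Cs = {0}"
  shows "V.independent (A \<union> C)"
proof -
  have sA: "V.span A = As" by (rule V.span_subspace) (use A in auto)
  have sC: "V.span C = Cs" by (rule V.span_subspace) (use C in auto)
  have 1: "a \<notin> V.span ((A \<union> C) - {a})" if "a \<in> A" for a
    by (rule indep_un_aux[OF A(1) C(2,3)]) (use int sA that in auto)
  have 2: "a \<notin> V.span ((C \<union> A) - {a})" if "a \<in> C" for a
    by (rule indep_un_aux[OF C(1) A(2,3)]) (use int sC that in auto)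
  show ?thesis unfolding V.dependent_def using 1 2 by (metis Un_commute Un_iff)
qed

theorem mainTheorem3:
  fixes n :: nat and Pi Sigma Y :: "(nat \<Rightarrow> bit) set"
  assumes "n \<ge> 2"
    and "subsp n Pi" and "sdim Pi = n" and "tot_sing n Pi"
    and "subsp n Sigma" and "sdim Sigma = n" and "tot_sing n Sigma"
    and "Pi \<inter> Sigma = {0}"
    and "subsp n Y" and "sdim Y = 1" and "tot_sing n Y"
    and "\<not> Y \<subseteq> Pi" and "\<not> Y \<subseteq> Sigma"
  shows "\<exists>J. (subsp n J \<and> sdim J = 2 \<and> Y \<subseteq> J \<and> J \<inter> Pi \<noteq> {0} \<and> J \<inter> Sigma \<noteq> {0})
           \<and> (\<forall>J'. subsp n J' \<and> sdim J' = 2 \<and> Y \<subseteq> J' \<and> J' \<inter> Pi \<noteq> {0} \<and> J' \<inter> Sigma \<noteq> {0}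
                   \<longrightarrow> J' = J)
           \<and> tot_sing n J"
proof -
  note asm = assms[unfolded subsp_def sdim_def tot_sing_def]
  obtain BY where BY: "BY \<subseteq> Y" "V.independent BY" "Y \<subseteq> V.span BY" "card BY = V.dim Y"
    by (rule V.basis_exists)
  have "card BY = 1" using BY(4) asm(10) by simp
  then obtain y where y: "BY = {y}" by (auto simp: card_1_singleton_iff)
  have y0: "y \<noteq> 0" using BY(2) y by simp
  have Yeq: "Y = {0, y}"
    using BY y span1[of y] asm(9) V.subspace_0 by auto
  have yV: "y \<in> Vsp n" using asm(9) Yeq by auto
  obtain BP where BP: "BP \<subseteq> Pi" "V.independent BP" "Pi \<subseteq> V.span BP" "card BP = V.dim Pi"
    by (rule V.basis_exists)
  obtain BS where BS: "BS \<subseteq> Sigma" "V.independent BS" "Sigma \<subseteq> V.span BS" "card BS = V.dim Sigma"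
    by (rule V.basis_exists)
  have cBP: "card BP = n" using BP(4) asm(3) by simp
  have cBS: "card BS = n" using BS(4) asm(6) by simp
  have fBP: "finite BP" using cBP asm(1) by (cases "finite BP") auto
  have fBS: "finite BS" using cBS asm(1) by (cases "finite BS") auto
  have dis: "BP \<inter> BS = {}"
  proof -
    have "BP \<inter> BS \<subseteq> {0}" using BP BS asm(8) by auto
    moreover have "0 \<notin> BP" using BP(2) V.dependent_zero by blast
    ultimately show ?thesis by auto
  qed
  have ind: "V.independent (BP \<union> BS)"
    by (rule indep_un[OF BP(2) _ BP(1,3) BS(2) _ BS(1,3) asm(8)]) (use asm(2,5) in auto)
  have cardB: "card (BP \<union> BS) = 2 * n" using fBP fBS dis cBP cBS by (simp add: card_Un_disjoint)
  have yspan: "y \<in> V.span (BP \<union> BS)"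
  proof (rule ccontr)
    assume yn: "y \<notin> V.span (BP \<union> BS)"
    have ind2: "V.independent (insert y (BP \<union> BS))" using V.independent_insertI[OF yn ind] .
    have "insert y (BP \<union> BS) \<subseteq> Vsp n" using yV BP BS asm(2,5) by auto
    also have "\<dots> \<subseteq> V.span (dl ` {..<2*n})" by (rule vsp_span)
    finally have "card (insert y (BP \<union> BS)) \<le> card (dl ` {..<2*n})"
      using V.independent_span_bound[OF _ ind2] by blast
    also have "\<dots> \<le> 2 * n" using card_image_le[of "{..<2*n}" dl] by simp
    finally have c: "card (insert y (BP \<union> BS)) \<le> 2 * n" .
    have "y \<notin> BP \<union> BS" using yn V.span_base by blast
    then show False using c fBP fBS cardB by simp
  qed
  have sP: "V.span BP = Pi" by (rule V.span_subspace) (use BP asm(2) in auto)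
  have sS: "V.span BS = Sigma" by (rule V.span_subspace) (use BS asm(5) in auto)
  obtain p s where ps: "y = p + s" "p \<in> Pi" "s \<in> Sigma"
    using yspan unfolding V.span_Un sP sS by blast
  have uniq: "a = p \<and> b = s" if "a \<in> Pi" "b \<in> Sigma" "y = a + b" for a b
  proof -
    have "a + p = b + s"
    proof -
      have "a + p + (b + s) = (a + b) + (p + s)" by (simp add: add_ac)
      also have "\<dots> = 0" using that ps by simp
      finally show ?thesis by (metis fadd_self2(2) add_0)
    qed
    moreover have "a + p \<in> Pi" using that ps asm(2) V.subspace_add by blast
    moreover have "b + s \<in> Sigma" using that ps asm(5) V.subspace_add by blast
    ultimately have "a + p = 0" "b + s = 0" using asm(8) by auto
    thus ?thesis by (metis fadd_self2(1) add_0_right)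
  qed
  have yP: "y \<notin> Pi" using asm(12) Yeq asm(2) V.subspace_0 by auto
  have yS: "y \<notin> Sigma" using asm(13) Yeq asm(5) V.subspace_0 by auto
  have p0: "p \<noteq> 0" using ps yS by auto
  have s0: "s \<noteq> 0" using ps yP by auto
  have pns: "p \<noteq> s" using ps asm(8) p0 by auto
  define J where "J = {0, p, s, p + s}"
  have Jsub: "V.subspace J" unfolding J_def by (rule sub4)
  have JV: "J \<subseteq> Vsp n" unfolding J_def using ps yV asm(2,5) V.subspace_0 by auto
  have Jdim: "V.dim J = 2"
  proof (rule V.dim_unique[of "{p, s}"])
    show "{p, s} \<subseteq> J" unfolding J_def by auto
    show "J \<subseteq> V.span {p, s}" unfolding J_def
      by (auto intro: V.span_base V.span_add V.span_zero)
    show "V.independent {p, s}"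
    proof (rule V.independent_insertI)
      show "p \<notin> V.span {s}" using span1[of s] p0 pns by auto
      show "V.independent {s}" using s0 by simp
    qed
    show "card {p, s} = 2" using pns by simp
  qed
  show ?thesis
  proof (intro exI[of _ J] conjI allI impI)
    show "subsp n J" unfolding subsp_def using Jsub JV by simp
    show "sdim J = 2" unfolding sdim_def by (rule Jdim)
    show "Y \<subseteq> J" unfolding Yeq J_def ps by auto
    show "J \<inter> Pi \<noteq> {0}" unfolding J_def using ps p0 by auto
    show "J \<inter> Sigma \<noteq> {0}" unfolding J_def using ps s0 by auto
    show "tot_sing n J" unfolding tot_sing_def J_def
      using asm(4,7,11) ps Yeq by auto
  next
    fix J' assume J': "subsp n J' \<and> sdim J' = 2 \<and> Y \<subseteq> J' \<and> J' \<inter> Pi \<noteq> {0} \<and> J' \<inter> Sigma \<noteq> {0}"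
    have z: "0 \<in> J'" "0 \<in> Pi" "0 \<in> Sigma"
      using J' asm(2,5) V.subspace_0 unfolding subsp_def by auto
    obtain a where a: "a \<in> J'" "a \<in> Pi" "a \<noteq> 0" using J' z by blast
    obtain b where b: "b \<in> J'" "b \<in> Sigma" "b \<noteq> 0" using J' z by blast
    have anb: "a \<noteq> b" using a b asm(8) by auto
    have J'eq: "J' = {0, a, b, a + b}"
      by (rule two_dim) (use J' a b anb in \<open>auto simp: subsp_def sdim_def\<close>)
    have "y \<in> J'" using J' Yeq by auto
    hence "y = a + b" using J'eq y0 a b yP yS by auto
    hence "a = p \<and> b = s" using uniq a b by blast
    thus "J' = J" using J'eq J_def by simp
  qed
qed

end
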